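(* Let $T$ be a rooted binary phylogenetic tree (root of out-degree 2) with leaf set $X$, $|X|\ge 3$, and edge substitution probabilities $p_e\in[0,\tfrac12]$, under the $N_2$ model. Let $y,z\in X$ be two leaves forming a cherry with common parent $w$, and let $p_y,p_z$ be the substitution probabilities of the edges $(w,y)$ and $(w,z)$. Put $$\theta=(1-p_y)(1-p_z)+p_yp_z \quad(\text{the probability that } f(y)=f(z)),\qquad \pi=\frac{p_yp_z}{\theta}.$$ Then $\pi\le\min\{p_y,p_z\}$ and $$RA_{\rm MP}(T)=\theta\cdot RA_{\rm MP}(T'_\pi)+(1-\theta)\cdot RA_{\rm MP}(T'').$$
   Context: A rooted binary phylogenetic tree is a finite tree with a distinguished root vertex $\rho$, all edges directed away from $\rho$, in which $\rho$ has out-degree 2 (such a tree is written $T$) or out-degree 1 (written $\dot T$; the edge at $\rho$ is then called the stem edge), and every other vertex has in-degree 1 and out-degree 0 or 2; vertices of out-degree 0 are leaves, forming the leaf set $X$. Under the Neyman $r$-state model $N_r$ ($r\ge2$) on a state set $\mathcal A$ with $|\mathcal A|=r$, each edge $e$ carries a substitution probability $p_e\in[0,\frac{r-1}{r}]$; given the root state $F(\rho)$, states propagate independently along edges: for an edge $(u,v)$, $F(v)=F(u)$ with probability $1-p_e$, and otherwise $F(v)$ is uniform among the $r-1$ states different from $F(u)$. The character is $f=F|_X$. For a vertex $v$, $p(v)$ is the probability that $F(v)\neq F(\rho)$. Fitch sets: each leaf $x$ gets $\mathrm{FS}(x)=\{f(x)\}$; a vertex $v$ with children $v_1,v_2$ gets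 $\mathrm{FS}(v_1)\cap\mathrm{FS}(v_2)$ if this is nonempty and $\mathrm{FS}(v_1)\cup\mathrm{FS}(v_2)$ otherwise; a vertex with a single child gets the Fitch set of its child. $\mathrm{FS}(f,T)=\mathrm{FS}(\rho)$, and $\mathrm{MP}(f,T)$ is a state chosen uniformly at random from $\mathrm{FS}(f,T)$. The reconstruction accuracy of maximum parsimony is $RA_{\rm MP}(T)=\mathbb P(\mathrm{MP}(f,T)=\alpha\mid F(\rho)=\alpha)$ (independent of $\alpha$ by symmetry). Vertices of in-degree 1 and out-degree 1 may be suppressed (merging two consecutive edges into one with the composed substitution probability, which leaves the distribution of leaf states unchanged). The tree $T'_\pi$ is obtained from $T$ by deleting the leaves $y,z$ and their incident edges, attaching a new leaf $w'$ to $w$ via an edge $(w,w')$ with substitution probability $\pi$, and suppressing $w$. The tree $T''$ is obtained from $T$ by deleting $y$, $z$, $w$, and all edges incident to them (including the edge into $w$), and suppressing the resulting vertex of in- and out-degree 1 (if the parent of $w$ was the root, the result is a tree whose root has out-degree 1). *)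

theory Defs
  imports "HOL-Probability.Probability_Mass_Function"
begin

text \<open>Node p l q r is an internal vertex of out-degree 2
  whose edge to the left child l has substitution probability p and whose edge to the right
  child r has substitution probability q.  Leaves are anonymous (the character is recorded
  positionally, see ctree below).\<close>
datatype tree = Leaf | Node real tree real tree

text \<open>A rooted phylogenetic tree: either the root has out-degree 2 (Rooted, the argument
  is then a Node), or the root has out-degree 1 with a stem edge of the given probability.\<close>
datatype rtree = Rooted tree | Stemmed real tree

fun num_leaves :: "tree \<Rightarrow> nat" where
  "num_leaves Leaf = 1"
| "num_leaves (Node p l q r) = num_leaves l + num_leaves r"

text \<open>All substitution probabilities lie in [0, (r-1)/r] = [0,1/2] (model N_2).\<close>
fun edges_ok :: "tree \<Rightarrow> bool" where
  "edges_ok Leaf = True"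
| "edges_ok (Node p l q r) = (0 \<le> p \<and> p \<le> 1/2 \<and> 0 \<le> q \<and> q \<le> 1/2 \<and> edges_ok l \<and> edges_ok r)"

text \<open>States: bool (two states). Along an edge with substitution probability p the state
  changes (to the unique other state) with probability p.\<close>
definition edge_pmf :: "real \<Rightarrow> bool \<Rightarrow> bool pmf" where
  "edge_pmf p a = map_pmf (\<lambda>flip. if flip then \<not> a else a) (bernoulli_pmf p)"

text \<open>A character on the leaves of a tree, recorded on a copy of the tree shape.\<close>
datatype ctree = CLeaf bool | CNode ctree ctree

fun char_pmf :: "tree \<Rightarrow> bool \<Rightarrow> ctree pmf" where
  "char_pmf Leaf a = return_pmf (CLeaf a)"
| "char_pmf (Node p l q r) a =
     bind_pmf (edge_pmf p a) (\<lambda>b. bind_pmf (edge_pmf q a) (\<lambda>c.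
     bind_pmf (char_pmf l b) (\<lambda>f. bind_pmf (char_pmf r c) (\<lambda>g. return_pmf (CNode f g)))))"

fun root_char_pmf :: "rtree \<Rightarrow> bool \<Rightarrow> ctree pmf" where
  "root_char_pmf (Rooted t) a = char_pmf t a"
| "root_char_pmf (Stemmed p t) a = bind_pmf (edge_pmf p a) (char_pmf t)"

text \<open>Fitch set at the top vertex (a vertex with a single child, i.e. the root of a stemmed
  tree, inherits the Fitch set of its child, so this is also FS(f,T) for Stemmed trees).\<close>
fun fitch :: "ctree \<Rightarrow> bool set" where
  "fitch (CLeaf b) = {b}"
| "fitch (CNode f g) = (if fitch f \<inter> fitch g \<noteq> {} then fitch f \<inter> fitch g else fitch f \<union> fitch g)"

definition mp_prob :: "bool set \<Rightarrow> bool \<Rightarrow> real" where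
  "mp_prob S a = (if a \<in> S then 1 / real (card S) else 0)"

text \<open>Reconstruction accuracy P(MP(f,T) = \<alpha> | F(\<rho>) = \<alpha>).\<close>
definition RA_MP :: "rtree \<Rightarrow> bool \<Rightarrow> real" where
  "RA_MP T \<alpha> = measure_pmf.expectation (root_char_pmf T \<alpha>) (\<lambda>f. mp_prob (fitch f) \<alpha>)"

text \<open>One-hole contexts: the path from the root down to a vertex u.  In CL p c q t the hole
  lies in the left subtree, reached via an edge of probability p.\<close>
datatype ctx = Hole | CL real ctx real tree | CR real tree real ctx

fun plug :: "ctx \<Rightarrow> tree \<Rightarrow> tree" where
  "plug Hole s = s"
| "plug (CL p c q t) s = Node p (plug c s) q t"
| "plug (CR p t q c) s = Node p t q (plug c s)"

text \<open>Composition of two consecutive edges under N_2 (suppressing a degree-2 vertex).\<close>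
definition sub_comp :: "real \<Rightarrow> real \<Rightarrow> real" where
  "sub_comp p q = p + q - 2 * p * q"

fun hole_comp :: "real \<Rightarrow> ctx \<Rightarrow> ctx" where
  "hole_comp r Hole = Hole"
| "hole_comp r (CL p c q t) = (if c = Hole then CL (sub_comp p r) Hole q t else CL p (hole_comp r c) q t)"
| "hole_comp r (CR p t q c) = (if c = Hole then CR p t (sub_comp q r) Hole else CR p t q (hole_comp r c))"

text \<open>The tree with a cherry {y,z} (edge probabilities py, pz) below w; w hangs below u
  (edge pw), u has the other subtree S (edge ps); u sits at the hole of C.  Every rooted binary tree with a cherry has this form.\<close>
definition with_cherry :: "ctx \<Rightarrow> bool \<Rightarrow> real \<Rightarrow> real \<Rightarrow> tree \<Rightarrow> real \<Rightarrow> real \<Rightarrow> tree" where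
  "with_cherry C left pw ps S py pz =
     plug C (if left then Node pw (Node py Leaf pz Leaf) ps S else Node ps S pw (Node py Leaf pz Leaf))"

text \<open>T'_pi: the cherry replaced by a single leaf w' attached to w by an edge of probability
  pi, and w suppressed (edge pw composed with pi).\<close>
definition contract_cherry :: "ctx \<Rightarrow> bool \<Rightarrow> real \<Rightarrow> real \<Rightarrow> tree \<Rightarrow> real \<Rightarrow> rtree" where
  "contract_cherry C left pw ps S \<pi> =
     Rooted (plug C (if left then Node (sub_comp pw \<pi>) Leaf ps S else Node ps S (sub_comp pw \<pi>) Leaf))"

text \<open>T'': y, z, w and the edge into w deleted and u suppressed; if u was the root, the result
  is a stemmed tree whose stem edge is the old edge (u, root of S).\<close>
definition delete_cherry :: "ctx \<Rightarrow> real \<Rightarrow> tree \<Rightarrow> rtree" where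
  "delete_cherry C ps S = (if C = Hole then Stemmed ps S else Rooted (plug (hole_comp ps C) S))"

end

theory Submission imports Defs begin


lemma integral_edge:
  assumes "0 \<le> p" "p \<le> 1"
  shows "measure_pmf.expectation (edge_pmf p a) f = f (\<not> a) * p + f a * (1 - p)"
  using assms by (simp add: edge_pmf_def)

lemma pmf_edge:
  assumes "0 \<le> p" "p \<le> 1"
  shows "pmf (edge_pmf p a) x = (if x = a then 1 - p else p)"
  using assms by (simp add: edge_pmf_def map_pmf_def pmf_bind indicator_def)

lemma sub_comp_range:
  assumes "0 \<le> p" "p \<le> 1" "0 \<le> r" "r \<le> 1"
  shows "0 \<le> sub_comp p r" "sub_comp p r \<le> 1"
proof -
  have "0 \<le> p * (1 - r) + r * (1 - p)" using assms by simp
  then show "0 \<le> sub_comp p r" by (simp add: sub_comp_def algebra_simps)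
  have "0 \<le> (1-p) * (1 - r) + r * p" using assms by simp
  then show "sub_comp p r \<le> 1" by (simp add: sub_comp_def algebra_simps)
qed

lemma edge_comp0:
  assumes "0 \<le> p" "p \<le> 1" "0 \<le> r" "r \<le> 1"
  shows "bind_pmf (edge_pmf p a) (edge_pmf r) = edge_pmf (sub_comp p r) a"
proof (rule pmf_eqI)
  fix x
  show "pmf (bind_pmf (edge_pmf p a) (edge_pmf r)) x = pmf (edge_pmf (sub_comp p r) a) x"
    using assms sub_comp_range[OF assms]
    by (simp add: pmf_bind integral_edge pmf_edge sub_comp_def algebra_simps)
qed

lemma edge_comp:
  assumes "0 \<le> p" "p \<le> 1" "0 \<le> r" "r \<le> 1"
  shows "bind_pmf (edge_pmf p a) (\<lambda>b. bind_pmf (edge_pmf r b) K) = bind_pmf (edge_pmf (sub_comp p r) a) K"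
  by (simp add: edge_comp0[OF assms, symmetric] bind_assoc_pmf)

definition fcomb :: "bool set \<Rightarrow> bool set \<Rightarrow> bool set" where
  "fcomb F G = (if F \<inter> G \<noteq> {} then F \<inter> G else F \<union> G)"

definition fp :: "tree \<Rightarrow> bool \<Rightarrow> bool set pmf" where
  "fp t a = map_pmf fitch (char_pmf t a)"

lemma fp_Leaf: "fp Leaf a = return_pmf {a}"
  by (simp add: fp_def)

lemma fp_Node: "fp (Node p l q r) a = bind_pmf (edge_pmf p a) (\<lambda>b. bind_pmf (edge_pmf q a) (\<lambda>c.
   bind_pmf (fp l b) (\<lambda>F. bind_pmf (fp r c) (\<lambda>G. return_pmf (fcomb F G)))))"
  by (simp add: fp_def map_bind_pmf bind_map_pmf fcomb_def)

fun cfp :: "ctx \<Rightarrow> (bool \<Rightarrow> bool set pmf) \<Rightarrow> bool \<Rightarrow> bool set pmf" where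
  "cfp Hole h a = h a"
| "cfp (CL p c q t) h a = bind_pmf (edge_pmf p a) (\<lambda>b. bind_pmf (edge_pmf q a) (\<lambda>c'.
   bind_pmf (cfp c h b) (\<lambda>F. bind_pmf (fp t c') (\<lambda>G. return_pmf (fcomb F G)))))"
| "cfp (CR p t q c) h a = bind_pmf (edge_pmf p a) (\<lambda>b. bind_pmf (edge_pmf q a) (\<lambda>c'.
   bind_pmf (fp t b) (\<lambda>F. bind_pmf (cfp c h c') (\<lambda>G. return_pmf (fcomb F G)))))"

lemma fp_plug: "fp (plug C s) a = cfp C (fp s) a"
  by (induction C arbitrary: a) (simp_all add: fp_Node)

lemma cfp_mix: "cfp C (\<lambda>a. bind_pmf (bernoulli_pmf \<theta>) (\<lambda>e. g e a)) a = bind_pmf (bernoulli_pmf \<theta>) (\<lambda>e. cfp C (g e) a)"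
proof (induction C arbitrary: a)
  case Hole
  then show ?case by simp
next
  case (CL p c q t)
  then show ?case by (simp add: bind_assoc_pmf bind_commute_pmf[of _ "bernoulli_pmf \<theta>"])
next
  case (CR p t q c)
  then show ?case by (simp add: bind_assoc_pmf bind_commute_pmf[of _ "bernoulli_pmf \<theta>"])
qed



lemma cherry:
  assumes p: "0 \<le> py" "py \<le> 1/2" "0 \<le> pz" "pz \<le> 1/2"
  defines "\<theta> \<equiv> (1 - py) * (1 - pz) + py * pz"
  defines "\<pi> \<equiv> py * pz / \<theta>"
  shows "fp (Node py Leaf pz Leaf) b = bind_pmf (bernoulli_pmf \<theta>)
     (\<lambda>e. if e then map_pmf (\<lambda>x. {x}) (edge_pmf \<pi> b) else return_pmf UNIV)"
proof (rule pmf_eqI)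
  fix X
  have th: "1/2 \<le> \<theta>" "\<theta> \<le> 1"
  proof -
    have "0 \<le> (1 - 2*py) * (1 - 2*pz)" using p by simp
    then show "1/2 \<le> \<theta>" unfolding \<theta>_def by (simp add: algebra_simps)
    have "0 \<le> py * (1 - pz) + pz * (1 - py)" using p by simp
    then show "\<theta> \<le> 1" unfolding \<theta>_def by (simp add: algebra_simps)
  qed
  have pi: "0 \<le> \<pi>" "\<pi> \<le> 1"
  proof -
    show "0 \<le> \<pi>" using p th unfolding \<pi>_def by simp
    have "py * pz \<le> \<theta>" using p th unfolding \<theta>_def 
      by (smt (verit, ccfv_SIG) mult_left_le_one_le mult_nonneg_nonneg)
    then show "\<pi> \<le> 1" using th unfolding \<pi>_def by simp
  qed
  have tpi: "\<theta> * \<pi> = py * pz" using th unfolding \<pi>_def by simp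
  have e1: "(UNIV::bool set) \<noteq> {True}" "(UNIV::bool set) \<noteq> {False}" "{True} \<noteq> {False}"
    by auto
  have u: "{True} \<union> {False} = UNIV" "{False} \<union> {True} = UNIV" "{True, False} = UNIV" "{False, True} = UNIV" by auto
  show "pmf (fp (Node py Leaf pz Leaf) b) X = pmf (bind_pmf (bernoulli_pmf \<theta>)
     (\<lambda>e. if e then map_pmf (\<lambda>x. {x}) (edge_pmf \<pi> b) else return_pmf UNIV)) X"
    using p th pi
    apply (simp add: fp_Node fp_Leaf pmf_bind integral_edge map_pmf_def fcomb_def indicator_def u)
    apply (cases b; cases "X = {True}"; cases "X = {False}"; cases "X = UNIV")
    using e1 tpi u apply (simp_all add: algebra_simps \<theta>_def)
    done
qed



lemma fitch_ne: "fitch f \<noteq> {}"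
  by (induction f) auto

lemma fp_ne: "F \<in> set_pmf (fp t a) \<Longrightarrow> F \<noteq> {}"
  by (auto simp: fp_def fitch_ne)

lemma fcomb_UNIV: "G \<noteq> {} \<Longrightarrow> fcomb UNIV G = G" "G \<noteq> {} \<Longrightarrow> fcomb G UNIV = G"
  by (auto simp: fcomb_def)

lemma bind_fcomb_UNIV1: "bind_pmf (fp S c) (\<lambda>G. return_pmf (fcomb UNIV G)) = fp S c"
proof -
  have "bind_pmf (fp S c) (\<lambda>G. return_pmf (fcomb UNIV G)) = bind_pmf (fp S c) return_pmf"
    by (rule bind_pmf_cong) (simp_all add: fp_ne fcomb_UNIV)
  then show ?thesis by (simp add: bind_return_pmf')
qed

lemma bind_fcomb_UNIV2: "bind_pmf (fp S c) (\<lambda>G. return_pmf (fcomb G UNIV)) = fp S c"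
proof -
  have "bind_pmf (fp S c) (\<lambda>G. return_pmf (fcomb G UNIV)) = bind_pmf (fp S c) return_pmf"
    by (rule bind_pmf_cong) (simp_all add: fp_ne fcomb_UNIV)
  then show ?thesis by (simp add: bind_return_pmf')
qed

lemma theta_pi:
  fixes py pz :: real
  assumes p: "0 \<le> py" "py \<le> 1/2" "0 \<le> pz" "pz \<le> 1/2"
  defines "\<theta> \<equiv> (1 - py) * (1 - pz) + py * pz"
  defines "\<pi> \<equiv> py * pz / \<theta>"
  shows "1/2 \<le> \<theta>" "\<theta> \<le> 1" "0 \<le> \<pi>" "\<pi> \<le> py" "\<pi> \<le> pz"
proof -
  have "0 \<le> (1 - 2*py) * (1 - 2*pz)" using p by simp
  then show t1: "1/2 \<le> \<theta>" unfolding \<theta>_def by (simp add: algebra_simps)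
  have "0 \<le> py * (1 - pz) + pz * (1 - py)" using p by simp
  then show "\<theta> \<le> 1" unfolding \<theta>_def by (simp add: algebra_simps)
  show "0 \<le> \<pi>" using p t1 unfolding \<pi>_def by simp
  have "0 \<le> (1 - 2*pz) * (1 - py)" using p by simp
  then have "pz \<le> \<theta>" unfolding \<theta>_def by (simp add: algebra_simps)
  then have "py * pz \<le> py * \<theta>" using p by (simp add: mult_left_mono)
  then show "\<pi> \<le> py" using t1 unfolding \<pi>_def by (simp add: divide_le_eq)
  have "0 \<le> (1 - 2*py) * (1 - pz)" using p by simp
  then have "py \<le> \<theta>" unfolding \<theta>_def by (simp add: algebra_simps)
  then have "py * pz \<le> pz * \<theta>" using p mult_right_mono[of py \<theta> pz] by (simp add: mult.commute)
  then show "\<pi> \<le> pz" using t1 unfolding \<pi>_def by (simp add: divide_le_eq)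
qed

lemma pull: "bind_pmf A (\<lambda>b. bind_pmf (B b) (\<lambda>F. bind_pmf M (\<lambda>x. K b F x))) =
  bind_pmf M (\<lambda>x. bind_pmf A (\<lambda>b. bind_pmf (B b) (\<lambda>F. K b F x)))"
proof -
  have "bind_pmf A (\<lambda>b. bind_pmf (B b) (\<lambda>F. bind_pmf M (\<lambda>x. K b F x))) =
     bind_pmf A (\<lambda>b. bind_pmf M (\<lambda>x. bind_pmf (B b) (\<lambda>F. K b F x)))"
    by (simp add: bind_commute_pmf[of "B _"])
  also have "\<dots> = bind_pmf M (\<lambda>x. bind_pmf A (\<lambda>b. bind_pmf (B b) (\<lambda>F. K b F x)))"
    by (rule bind_commute_pmf)
  finally show ?thesis .
qed

lemma ulemma:
  assumes p: "0 \<le> py" "py \<le> 1/2" "0 \<le> pz" "pz \<le> 1/2" "0 \<le> pw" "pw \<le> 1/2" "0 \<le> ps" "ps \<le> 1/2"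
  defines "\<theta> \<equiv> (1 - py) * (1 - pz) + py * pz"
  defines "\<pi> \<equiv> py * pz / \<theta>"
  shows "fp (Node pw (Node py Leaf pz Leaf) ps S) a = bind_pmf (bernoulli_pmf \<theta>)
     (\<lambda>e. if e then fp (Node (sub_comp pw \<pi>) Leaf ps S) a else bind_pmf (edge_pmf ps a) (fp S))"
   (is ?L)
  and "fp (Node ps S pw (Node py Leaf pz Leaf)) a = bind_pmf (bernoulli_pmf \<theta>)
     (\<lambda>e. if e then fp (Node ps S (sub_comp pw \<pi>) Leaf) a else bind_pmf (edge_pmf ps a) (fp S))"
   (is ?R)
proof -
  note tp = theta_pi[OF p(1-4), folded \<theta>_def, folded \<pi>_def]
  note ch = cherry[OF p(1-4), folded \<theta>_def, folded \<pi>_def]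
  have pi1: "0 \<le> \<pi>" "\<pi> \<le> 1" using tp p by auto
  have pw1: "0 \<le> pw" "pw \<le> 1" using p by auto
  show ?L
    apply (simp add: fp_Node[of pw] ch bind_assoc_pmf)
    apply (simp add: bind_commute_pmf[of _ "bernoulli_pmf \<theta>"])
    apply (rule bind_pmf_cong, simp)
    apply (simp add: map_pmf_def bind_assoc_pmf bind_return_pmf fp_Node fp_Leaf bind_fcomb_UNIV1)
    apply (simp add: bind_commute_pmf[of "edge_pmf ps a"] edge_comp[OF pw1 pi1])
    done
  show ?R
    apply (simp add: fp_Node[of ps] ch bind_assoc_pmf)
    apply (simp add: bind_commute_pmf[of _ "bernoulli_pmf \<theta>"])
    apply (rule bind_pmf_cong, simp)
    apply (simp add: map_pmf_def bind_assoc_pmf bind_return_pmf fp_Node fp_Leaf bind_fcomb_UNIV2)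
    apply (simp add: bind_commute_pmf[of "fp S _"] edge_comp[OF pw1 pi1])
    done
qed



fun ctx_ok :: "ctx \<Rightarrow> bool" where
  "ctx_ok Hole = True"
| "ctx_ok (CL p c q t) = (0 \<le> p \<and> p \<le> 1/2 \<and> ctx_ok c)"
| "ctx_ok (CR p t q c) = (0 \<le> q \<and> q \<le> 1/2 \<and> ctx_ok c)"

lemma edges_ok_plug: "edges_ok (plug C s) \<Longrightarrow> ctx_ok C \<and> edges_ok s"
  by (induction C) auto

lemma hole_comp_fp:
  assumes "C \<noteq> Hole" "ctx_ok C" "0 \<le> r" "r \<le> 1"
  shows "cfp C (\<lambda>a. bind_pmf (edge_pmf r a) (fp S)) a = fp (plug (hole_comp r C) S) a"
  using assms
proof (induction C arbitrary: a)
  case Hole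
  then show ?case by simp
next
  case (CL p c q t)
  show ?case
  proof (cases "c = Hole")
    case True
    have p1: "0 \<le> p" "p \<le> 1" using CL by auto
    show ?thesis using True CL.prems
      by (simp add: fp_Node bind_assoc_pmf bind_commute_pmf[of "edge_pmf q a"] edge_comp[OF p1])
  next
    case False
    then show ?thesis using CL by (simp add: fp_Node)
  qed
next
  case (CR p t q c)
  show ?case
  proof (cases "c = Hole")
    case True
    have p1: "0 \<le> q" "q \<le> 1" using CR by auto
    show ?thesis using True CR.prems
      by (simp add: fp_Node bind_assoc_pmf bind_commute_pmf[of "fp t _"] edge_comp[OF p1])
  next
    case False
    then show ?thesis using CR by (simp add: fp_Node)
  qed
qed

lemma exp_mix:
  fixes f :: "bool set \<Rightarrow> real"
  assumes "0 \<le> \<theta>" "\<theta> \<le> 1"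
  shows "measure_pmf.expectation (bind_pmf (bernoulli_pmf \<theta>) G) f =
    \<theta> * measure_pmf.expectation (G True) f + (1 - \<theta>) * measure_pmf.expectation (G False) f"
proof -
  have e: "\<And>M. measure_pmf.expectation M f = (\<Sum>a\<in>UNIV. f a * pmf M a)"
    by (rule integral_measure_pmf_real) auto
  have "(\<Sum>a\<in>UNIV. f a * pmf (bind_pmf (bernoulli_pmf \<theta>) G) a) =
     (\<Sum>a\<in>UNIV. \<theta> * (f a * pmf (G True) a) + (1 - \<theta>) * (f a * pmf (G False) a))"
    using assms by (simp add: pmf_bind algebra_simps)
  then show ?thesis
    unfolding e by (simp add: sum.distrib sum_distrib_left)
qed

lemma RA_fp: "RA_MP (Rooted t) \<alpha> = measure_pmf.expectation (fp t \<alpha>) (\<lambda>F. mp_prob F \<alpha>)"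
  by (simp add: RA_MP_def fp_def)

theorem theorem1:
  fixes C :: ctx and left :: bool and pw ps py pz :: real and S :: tree and \<alpha> :: bool
  defines "T \<equiv> with_cherry C left pw ps S py pz"
  defines "\<theta> \<equiv> (1 - py) * (1 - pz) + py * pz"
  defines "\<pi> \<equiv> py * pz / \<theta>"
  assumes "edges_ok T"
    and "num_leaves T \<ge> 3"
  shows "\<pi> \<le> min py pz \<and>
    RA_MP (Rooted T) \<alpha> = \<theta> * RA_MP (contract_cherry C left pw ps S \<pi>) \<alpha>
                        + (1 - \<theta>) * RA_MP (delete_cherry C ps S) \<alpha>"
proof -
  define U where "U = (if left then Node pw (Node py Leaf pz Leaf) ps S else Node ps S pw (Node py Leaf pz Leaf))"
  define U1 where "U1 = (if left then Node (sub_comp pw \<pi>) Leaf ps S else Node ps S (sub_comp pw \<pi>) Leaf)"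
  have TU: "T = plug C U" unfolding T_def U_def with_cherry_def by simp
  from assms(4) TU have ok: "ctx_ok C" "edges_ok U" using edges_ok_plug by auto
  then have p: "0 \<le> py" "py \<le> 1/2" "0 \<le> pz" "pz \<le> 1/2" "0 \<le> pw" "pw \<le> 1/2" "0 \<le> ps" "ps \<le> 1/2"
    unfolding U_def by (auto split: if_splits)
  note tp = theta_pi[OF p(1-4), folded \<theta>_def, folded \<pi>_def]
  define g where "g = (\<lambda>e a. if e then fp U1 a else bind_pmf (edge_pmf ps a) (fp S))"
  have Ug: "fp U a = bind_pmf (bernoulli_pmf \<theta>) (\<lambda>e. g e a)" for a
    unfolding U_def U1_def g_def \<theta>_def \<pi>_def using ulemma[OF p] by simp
  have "fp T \<alpha> = cfp C (\<lambda>a. bind_pmf (bernoulli_pmf \<theta>) (\<lambda>e. g e a)) \<alpha>"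
  proof -
    have "fp U = (\<lambda>a. bind_pmf (bernoulli_pmf \<theta>) (\<lambda>e. g e a))" using Ug by (simp add: fun_eq_iff)
    then show ?thesis using TU fp_plug by simp
  qed
  also have "\<dots> = bind_pmf (bernoulli_pmf \<theta>) (\<lambda>e. cfp C (g e) \<alpha>)" by (rule cfp_mix)
  finally have fT: "fp T \<alpha> = bind_pmf (bernoulli_pmf \<theta>) (\<lambda>e. cfp C (g e) \<alpha>)" .
  have c1: "measure_pmf.expectation (cfp C (g True) \<alpha>) (\<lambda>F. mp_prob F \<alpha>) = RA_MP (contract_cherry C left pw ps S \<pi>) \<alpha>"
  proof -
    have "g True = fp U1" by (simp add: g_def fun_eq_iff)
    then show ?thesis
      by (simp add: contract_cherry_def RA_fp fp_plug[symmetric] U1_def)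
  qed
  have c2: "measure_pmf.expectation (cfp C (g False) \<alpha>) (\<lambda>F. mp_prob F \<alpha>) = RA_MP (delete_cherry C ps S) \<alpha>"
  proof (cases "C = Hole")
    case True
    have "fp S = (\<lambda>a. map_pmf fitch (char_pmf S a))" by (simp add: fun_eq_iff fp_def)
    then have "bind_pmf (edge_pmf ps \<alpha>) (fp S) = map_pmf fitch (bind_pmf (edge_pmf ps \<alpha>) (char_pmf S))"
      by (simp add: map_bind_pmf)
    then show ?thesis using True
      by (simp add: delete_cherry_def g_def RA_MP_def)
  next
    case False
    have "g False = (\<lambda>a. bind_pmf (edge_pmf ps a) (fp S))" by (simp add: g_def fun_eq_iff)
    then show ?thesis using False hole_comp_fp[OF False ok(1), of ps S \<alpha>] p
      by (simp add: delete_cherry_def RA_fp)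
  qed
  have "RA_MP (Rooted T) \<alpha> = \<theta> * RA_MP (contract_cherry C left pw ps S \<pi>) \<alpha>
                        + (1 - \<theta>) * RA_MP (delete_cherry C ps S) \<alpha>"
    using tp by (simp add: RA_fp fT exp_mix c1 c2)
  then show ?thesis using tp by simp
qed

end
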